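(* Let $\tilde g$ be a continuous totally positive function of one of the following forms: either $\tilde g=g$ with $$\hat g(\omega)=\prod_{\nu=1}^{\infty}\frac{e^{2\pi i\omega/a_\nu}}{1+2\pi i\omega/a_\nu},$$ where $(a_\nu)_{\nu\in\mathbb{N}}\subset\mathbb{R}\setminus\{0\}$ with $\sum_{\nu}a_\nu^{-2}<\infty$, or $\tilde g=g_n$ with $$\hat g_n(\omega)=\prod_{\nu=1}^{n}\frac{e^{2\pi i\omega/a_\nu}}{1+2\pi i\omega/a_\nu},\qquad a_1,\dots,a_n\in\mathbb{R}\setminus\{0\}.$$ Then the function $x\mapsto\mathrm Z\tilde g(x,\tfrac12)$ is real-valued, $2$-periodic, and not identically zero.
   Context: The Fourier transform is $\hat f(\omega)=\int_{\mathbb{R}} f(t)e^{-2\pi i t\omega}\,dt$. The Zak transform is $\mathrm Zf(x,\omega)=\sum_{k\in\mathbb{Z}} f(x+k)e^{-2\pi i k\omega}$; in particular $\mathrm Z\tilde g(x,\tfrac12)=\sum_{k\in\mathbb{Z}}(-1)^k\tilde g(x+k)$. *)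

theory Defs
  imports "HOL-Analysis.Analysis" "HOL-Combinatorics.Permutations"
begin

definition fourier :: "(real \<Rightarrow> complex) \<Rightarrow> real \<Rightarrow> complex" where
  "fourier f w = (LINT t|lborel. f t * exp (- 2 * pi * \<i> * complex_of_real (t * w)))"

definition zak :: "(real \<Rightarrow> complex) \<Rightarrow> real \<Rightarrow> real \<Rightarrow> complex" where
  "zak f x w = (\<Sum>\<^sub>\<infinity>k::int. f (x + of_int k) * exp (- 2 * pi * \<i> * complex_of_real (of_int k * w)))"

text \<open>Total positivity: all determinants det[g(x_i - y_j)] with x_1<...<x_N,
  y_1<...<y_N (any N) are nonnegative; determinant written via the Leibniz formula.\<close>
definition totally_positive :: "(real \<Rightarrow> real) \<Rightarrow> bool" where
  "totally_positive g \<longleftrightarrow>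
     (\<forall>(N::nat) (x::nat \<Rightarrow> real) (y::nat \<Rightarrow> real).
        strict_mono_on {..<N} x \<longrightarrow> strict_mono_on {..<N} y \<longrightarrow>
        0 \<le> (\<Sum>p | p permutes {..<N}. of_int (sign p) * (\<Prod>i<N. g (x i - y (p i)))))"

definition tp_factor :: "real \<Rightarrow> real \<Rightarrow> complex" where
  "tp_factor a w = exp (2 * pi * \<i> * complex_of_real (w / a)) / (1 + 2 * pi * \<i> * complex_of_real (w / a))"

end

theory Submission imports Defs "HOL-Library.Nat_Bijection" begin


lemma tp_nonneg:
  assumes "totally_positive g" shows "0 \<le> g t"
proof -
  have sm: "strict_mono_on {..<Suc 0} (f::nat\<Rightarrow>real)" for f by (auto simp: strict_mono_on_def)
  have "0 \<le> (\<Sum>p | p permutes {..<Suc 0}. of_int (sign p) * (\<Prod>i<Suc 0. g ((\<lambda>_. t) i - (\<lambda>_. 0) (p i))))"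
    using assms[unfolded totally_positive_def, rule_format, OF sm sm] .
  moreover have "{p. p permutes {..<Suc 0}} = {id}"
    using permutes_sing[of _ 0] by (auto simp: lessThan_Suc)
  ultimately show ?thesis by (simp add: sign_id)
qed

lemma perm2_sum:
  "(\<Sum>pp | pp permutes {..<2::nat}. F pp) = F id + F (Transposition.transpose 0 1)"
proof -
  have e: "{..<2::nat} = insert 0 {1}" by auto
  have f12: "finite {1::nat}" "0 \<notin> {1::nat}" by auto
  show ?thesis unfolding e sum_over_permutations_insert[OF f12] permutes_sing
    by simp
qed

lemma tp_pf2:
  assumes "totally_positive g" "p < q"
  shows "g p * g q \<le> g ((p+q)/2) * g ((p+q)/2)"
proof -
  define m where "m = (p+q)/2"
  define x where "x = (\<lambda>i::nat. if i = 0 then m else q)"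
  define y where "y = (\<lambda>i::nat. if i = 0 then 0 else m - p)"
  have sx: "strict_mono_on {..<2} x" "strict_mono_on {..<2} y"
    using assms(2) by (auto simp: strict_mono_on_def x_def y_def m_def)
  have "0 \<le> (\<Sum>pp | pp permutes {..<2}. of_int (sign pp) * (\<Prod>i<2. g (x i - y (pp i))))"
    using assms(1) sx unfolding totally_positive_def by blast
  then have "0 \<le> g m * g m - g p * g q"
    unfolding perm2_sum by (simp add: sign_swap_id sign_id x_def y_def numeral_2_eq_2 m_def field_simps)
  then show ?thesis unfolding m_def by simp
qed



lemma tp_qc:
  assumes cont: "continuous_on UNIV g" and tp: "totally_positive g"
    and ba: "b < a" and ac: "a < c"
  shows "min (g b) (g c) \<le> g a"
proof (rule ccontr)
  define m where "m = min (g b) (g c)"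
  assume "\<not> min (g b) (g c) \<le> g a"
  then have gam: "g a < m" unfolding m_def by linarith
  have m0: "0 < m" using gam tp_nonneg[OF tp, of a] by linarith
  have cl: "closed {t. m \<le> g t}"
    using closed_Collect_le[of "\<lambda>_. m" g] cont by auto
  have K1: "compact ({b..a} \<inter> {t. m \<le> g t})" "{b..a} \<inter> {t. m \<le> g t} \<noteq> {}"
  proof -
    have "b \<in> {b..a} \<inter> {t. m \<le> g t}" using ba by (auto simp: m_def)
    then show "compact ({b..a} \<inter> {t. m \<le> g t})" "{b..a} \<inter> {t. m \<le> g t} \<noteq> {}"
      using cl by (auto intro!: compact_Int_closed)
  qed
  obtain p where p: "p \<in> {b..a} \<inter> {t. m \<le> g t}" "\<And>y. y \<in> {b..a} \<inter> {t. m \<le> g t} \<Longrightarrow> y \<le> p"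
    using compact_attains_sup[OF K1] by blast
  have K2: "compact ({a..c} \<inter> {t. m \<le> g t})" "{a..c} \<inter> {t. m \<le> g t} \<noteq> {}"
  proof -
    have "c \<in> {a..c} \<inter> {t. m \<le> g t}" using ac by (auto simp: m_def)
    then show "compact ({a..c} \<inter> {t. m \<le> g t})" "{a..c} \<inter> {t. m \<le> g t} \<noteq> {}"
      using cl by (auto intro!: compact_Int_closed)
  qed
  obtain q where q: "q \<in> {a..c} \<inter> {t. m \<le> g t}" "\<And>y. y \<in> {a..c} \<inter> {t. m \<le> g t} \<Longrightarrow> q \<le> y"
    using compact_attains_inf[OF K2] by blast
  have pa: "p < a" using p gam by (cases "p = a") auto
  have aq: "a < q" using q gam by (cases "q = a") auto
  have lt: "g t < m" if "p < t" "t < q" for t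
  proof (cases "t \<le> a")
    case True
    then show ?thesis using p(2)[of t] p(1) that by force
  next
    case False
    then show ?thesis using q(2)[of t] q(1) that by force
  qed
  define z where "z = (p+q)/2"
  have gz: "g z < m" "0 \<le> g z" using lt[of z] pa aq tp_nonneg[OF tp] unfolding z_def by auto
  have "g p * g q \<le> g z * g z" using tp_pf2[OF tp, of p q] pa aq unfolding z_def by simp
  moreover have "m * m \<le> g p * g q" using p q m0 by (intro mult_mono) auto
  moreover have "g z * g z < m * m" using gz m0 by (meson mult_strict_mono')
  ultimately show False by linarith
qed



lemma tp_summable:
  fixes g :: "real \<Rightarrow> real"
  assumes cont: "continuous_on UNIV g" and integ: "integrable lborel g" and tp: "totally_positive g"
  shows "(\<lambda>k::int. g (x + of_int k)) summable_on UNIV"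
proof -
  define u where "u k = g (x + of_int k)" for k :: int
  define J where "J k = {x + of_int k ..< x + of_int k + 1}" for k :: int
  define I where "I k = (LINT t|lborel. g t * indicator (J k) t)" for k :: int
  have u0: "0 \<le> u k" for k unfolding u_def using tp_nonneg[OF tp] .
  have g0: "0 \<le> g t" for t using tp_nonneg[OF tp] .
  have intJ: "integrable lborel (\<lambda>t. g t * indicator (J k) t)" for k
    by (rule integrable_real_mult_indicator) (auto simp: J_def integ)
  have I0: "0 \<le> I k" for k unfolding I_def by (rule integral_nonneg_AE) (auto simp: g0)
  have inJ: "t \<in> J k \<longleftrightarrow> k = \<lfloor>t - x\<rfloor>" for t k
  proof -
    have "t \<in> J k \<longleftrightarrow> \<lfloor>t - x\<rfloor> = k" unfolding J_def floor_eq_iff by auto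
    then show ?thesis by auto
  qed
  have Ibound: "sum I F \<le> integral\<^sup>L lborel g" if "finite F" for F
  proof -
    have "sum I F = (LINT t|lborel. (\<Sum>k\<in>F. g t * indicator (J k) t))"
      unfolding I_def using Bochner_Integration.integral_sum[where I=F and M=lborel and f="\<lambda>k t. g t * indicator (J k) t"] intJ by simp
    also have "\<dots> \<le> integral\<^sup>L lborel g"
    proof (rule integral_mono)
      show "integrable lborel (\<lambda>t. \<Sum>k\<in>F. g t * indicator (J k) t)" using intJ by auto
      show "integrable lborel g" by (rule integ)
      fix t
      have "(\<Sum>k\<in>F. g t * indicator (J k) t) = (\<Sum>k\<in>F. if k = \<lfloor>t - x\<rfloor> then g t else 0)"
        by (intro sum.cong) (auto simp: indicator_def inJ)
      also have "\<dots> \<le> g t" using \<open>finite F\<close> by (simp add: g0)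
      finally show "(\<Sum>k\<in>F. g t * indicator (J k) t) \<le> g t" .
    qed
    finally show ?thesis .
  qed
  have minb: "min (u k) (u (k+1)) \<le> I k" for k
  proof -
    have "min (u k) (u (k+1)) = (LINT t|lborel. min (u k) (u (k+1)) * indicator (J k) t)"
      by (simp add: J_def)
    also have "\<dots> \<le> I k" unfolding I_def
    proof (rule integral_mono)
      show "integrable lborel (\<lambda>t. min (u k) (u (k+1)) * indicator (J k) t)"
        by (auto simp: J_def)
      show "integrable lborel (\<lambda>t. g t * indicator (J k) t)" by (rule intJ)
      fix t
      show "min (u k) (u (k+1)) * indicator (J k) t \<le> g t * indicator (J k) t"
      proof (cases "t \<in> J k")
        case True
        show ?thesis
        proof (cases "t = x + of_int k")
          case True then show ?thesis by (simp add: u_def indicator_def)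
        next
          case False
          then have "x + of_int k < t" "t < x + of_int (k+1)" using \<open>t \<in> J k\<close> by (auto simp: J_def)
          from tp_qc[OF cont tp this] show ?thesis using True by (simp add: u_def)
        qed
      qed simp
    qed
    finally show ?thesis .
  qed
  define S where "S = {k. u (k-1) < u k \<and> u (k+1) < u k}"
  have Suniq: "k = l" if "k \<in> S" "l \<in> S" for k l
  proof (rule ccontr)
    assume "k \<noteq> l"
    have main: False if kl: "k < l" "k \<in> S" "l \<in> S" for k l
    proof (cases "l = k + 1")
      case True then show False using kl by (auto simp: S_def)
    next
      case False
      define T where "T = {k+1..l-1}"
      have T: "finite T" "T \<noteq> {}" using kl False by (auto simp: T_def)
      have "Min (u ` T) \<in> u ` T" using T by (intro Min_in) auto
      then obtain j where j: "j \<in> T" "u j = Min (u ` T)" by auto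
      have "k+1 \<in> T" "l-1 \<in> T" using kl False by (auto simp: T_def)
      then have "u j \<le> u (k+1)" "u j \<le> u (l-1)" using j T by auto
      then have "u j < u k" "u j < u l" using kl by (auto simp: S_def)
      moreover have "min (u k) (u l) \<le> u j" unfolding u_def
        by (rule tp_qc[OF cont tp]) (use j in \<open>auto simp: T_def\<close>)
      ultimately show False by linarith
    qed
    show False using main[of k l] main[of l k] that \<open>k \<noteq> l\<close> by linarith
  qed
  have "\<exists>p. \<forall>k\<in>S. k = p"
  proof (cases "S = {}")
    case True then show ?thesis by blast
  next
    case False then obtain p where "p \<in> S" by blast
    then show ?thesis using Suniq by blast
  qed
  then obtain p where p: "\<And>k. k \<in> S \<Longrightarrow> k = p" by blast
  have ub: "u k \<le> I (k-1) + I k" if "k \<notin> S" for k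
  proof -
    have "u k \<le> u (k-1) \<or> u k \<le> u (k+1)" using that by (auto simp: S_def)
    then show ?thesis
    proof
      assume "u k \<le> u (k-1)"
      then show ?thesis using minb[of "k-1"] I0[of k] by simp
    next
      assume "u k \<le> u (k+1)"
      then show ?thesis using minb[of k] I0[of "k-1"] by simp
    qed
  qed
  have bound: "sum u F \<le> 2 * integral\<^sup>L lborel g + u p" if "finite F" for F
  proof -
    have "sum u F = sum u (F - {p}) + sum u (F \<inter> {p})"
      using sum.Int_Diff[OF that, of u "{p}"] by simp
    also have "sum u (F \<inter> {p}) \<le> u p" using u0[of p] by (cases "p \<in> F") auto
    also have "sum u (F - {p}) \<le> sum (\<lambda>k. I (k-1) + I k) (F - {p})"
      using ub p by (intro sum_mono) auto
    also have "\<dots> \<le> sum (\<lambda>k. I (k-1) + I k) F"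
      using that I0 by (intro sum_mono2) (auto intro: add_nonneg_nonneg)
    also have "\<dots> = sum I ((\<lambda>k. k - 1) ` F) + sum I F"
      by (simp add: sum.distrib sum.reindex inj_on_def)
    also have "\<dots> \<le> 2 * integral\<^sup>L lborel g"
      using Ibound[of F] Ibound[of "(\<lambda>k. k - 1) ` F"] that by simp
    finally show ?thesis by simp
  qed
  have "u summable_on UNIV"
    by (rule nonneg_bdd_above_summable_on) (use u0 bound in \<open>auto intro!: bdd_aboveI[where M="2 * integral\<^sup>L lborel g + u p"]\<close>)
  then show ?thesis unfolding u_def .
qed



lemma ek: "exp (- 2 * pi * \<i> * complex_of_real (of_int k * (1/2))) = complex_of_real (cos (pi * of_int k))"
proof -
  have "exp (- 2 * pi * \<i> * complex_of_real (of_int k * (1/2))) = cis (- (pi * of_int k))"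
    by (simp add: cis_conv_exp algebra_simps)
  also have "\<dots> = complex_of_real (cos (pi * of_int k))"
    by (simp add: cis.ctr sin_int_times_real mult.commute Complex_eq)
  finally show ?thesis .
qed

lemma cos_int_abs: "\<bar>cos (pi * of_int k)\<bar> \<le> 1" by simp

lemma cos_int_add2: "cos (pi * of_int (k + 2)) = cos (pi * of_int k)"
proof -
  have "pi * of_int (k + 2) = pi * of_int k + 2 * pi" by (simp add: algebra_simps)
  then show ?thesis by simp
qed

lemma Eadd: "exp (- 2 * pi * \<i> * complex_of_real ((x + of_int k) * (1/2)))
   = exp (- 2 * pi * \<i> * complex_of_real (x * (1/2))) * complex_of_real (cos (pi * of_int k))"
proof -
  have "exp (- 2 * pi * \<i> * complex_of_real ((x + of_int k) * (1/2)))
     = exp (- 2 * pi * \<i> * complex_of_real (x * (1/2)) + - 2 * pi * \<i> * complex_of_real (of_int k * (1/2)))"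
    by (rule arg_cong[where f=exp]) (simp add: field_simps)
  also have "\<dots> = exp (- 2 * pi * \<i> * complex_of_real (x * (1/2))) * complex_of_real (cos (pi * of_int k))"
    by (simp only: exp_add ek)
  finally show ?thesis .
qed

lemma interval_sum_bound:
  fixes g :: "real \<Rightarrow> real"
  assumes integ: "integrable lborel g" and g0: "\<And>t. 0 \<le> g t" and fin: "finite F"
  shows "(\<Sum>k\<in>F. LINT t|lborel. g t * indicator {a + of_int k ..< a + of_int k + 1} t) \<le> integral\<^sup>L lborel g"
proof -
  define J where "J k = {a + of_int k ..< a + of_int k + 1}" for k :: int
  have intJ: "integrable lborel (\<lambda>t. g t * indicator (J k) t)" for k
    by (rule integrable_real_mult_indicator) (auto simp: J_def integ)
  have inJ: "t \<in> J k \<longleftrightarrow> k = \<lfloor>t - a\<rfloor>" for t k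
  proof -
    have "t \<in> J k \<longleftrightarrow> \<lfloor>t - a\<rfloor> = k" unfolding J_def floor_eq_iff by auto
    then show ?thesis by auto
  qed
  have "(\<Sum>k\<in>F. LINT t|lborel. g t * indicator (J k) t) = (LINT t|lborel. (\<Sum>k\<in>F. g t * indicator (J k) t))"
    using Bochner_Integration.integral_sum[where I=F and M=lborel and f="\<lambda>k t. g t * indicator (J k) t"] intJ by simp
  also have "\<dots> \<le> integral\<^sup>L lborel g"
  proof (rule integral_mono)
    show "integrable lborel (\<lambda>t. \<Sum>k\<in>F. g t * indicator (J k) t)" using intJ by auto
    show "integrable lborel g" by (rule integ)
    fix t
    have "(\<Sum>k\<in>F. g t * indicator (J k) t) = (\<Sum>k\<in>F. if k = \<lfloor>t - a\<rfloor> then g t else 0)"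
      by (intro sum.cong) (auto simp: indicator_def inJ)
    also have "\<dots> \<le> g t" using fin by (simp add: g0)
    finally show "(\<Sum>k\<in>F. g t * indicator (J k) t) \<le> g t" .
  qed
  finally show ?thesis unfolding J_def .
qed

lemma tp_factor_nz: "tp_factor a w \<noteq> 0"
proof -
  have "1 + 2 * pi * \<i> * complex_of_real (w / a) \<noteq> 0"
  proof
    assume "1 + 2 * pi * \<i> * complex_of_real (w / a) = 0"
    then have "Re (1 + 2 * pi * \<i> * complex_of_real (w / a)) = 0" by simp
    then show False by simp
  qed
  then show ?thesis unfolding tp_factor_def by simp
qed

lemma fourier_nz:
  fixes g :: "real \<Rightarrow> real"
  assumes form:
      "(\<exists>a :: nat \<Rightarrow> real. (\<forall>\<nu>. a \<nu> \<noteq> 0) \<and> summable (\<lambda>\<nu>. 1 / (a \<nu>)\<^sup>2) \<and>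
          (\<forall>w. (\<lambda>\<nu>. tp_factor (a \<nu>) w) has_prod fourier (\<lambda>t. complex_of_real (g t)) w))
       \<or> (\<exists>(n::nat) (a :: nat \<Rightarrow> real). (\<forall>\<nu><n. a \<nu> \<noteq> 0) \<and>
          (\<forall>w. fourier (\<lambda>t. complex_of_real (g t)) w = (\<Prod>\<nu><n. tp_factor (a \<nu>) w)))"
  shows "fourier (\<lambda>t. complex_of_real (g t)) w \<noteq> 0"
  using form
proof
  assume "\<exists>a :: nat \<Rightarrow> real. (\<forall>\<nu>. a \<nu> \<noteq> 0) \<and> summable (\<lambda>\<nu>. 1 / (a \<nu>)\<^sup>2) \<and>
          (\<forall>w. (\<lambda>\<nu>. tp_factor (a \<nu>) w) has_prod fourier (\<lambda>t. complex_of_real (g t)) w)"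
  then obtain a where "(\<lambda>\<nu>. tp_factor (a \<nu>) w) has_prod fourier (\<lambda>t. complex_of_real (g t)) w" by blast
  then show ?thesis using has_prod_0_iff tp_factor_nz by metis
next
  assume "\<exists>(n::nat) (a :: nat \<Rightarrow> real). (\<forall>\<nu><n. a \<nu> \<noteq> 0) \<and>
          (\<forall>w. fourier (\<lambda>t. complex_of_real (g t)) w = (\<Prod>\<nu><n. tp_factor (a \<nu>) w))"
  then have "\<exists>n (a::nat\<Rightarrow>real). fourier (\<lambda>t. complex_of_real (g t)) w = (\<Prod>\<nu><n. tp_factor (a \<nu>) w)" by blast
  then show ?thesis by (auto simp: tp_factor_nz)
qed



lemma r_summable:
  fixes g :: "real \<Rightarrow> real"
  assumes cont: "continuous_on UNIV g" and integ: "integrable lborel g" and tp: "totally_positive g"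
  shows "(\<lambda>k::int. g (x + of_int k) * cos (pi * of_int k)) summable_on UNIV"
proof -
  have "(\<lambda>k::int. norm (g (x + of_int k) * cos (pi * of_int k))) summable_on UNIV"
    by (rule summable_on_comparison_test[OF tp_summable[OF cont integ tp]])
       (auto simp: abs_mult tp_nonneg[OF tp] intro!: mult_left_le_one_le)
  then show ?thesis by (rule abs_summable_summable)
qed

lemma zak_eq:
  fixes g :: "real \<Rightarrow> real"
  assumes cont: "continuous_on UNIV g" and integ: "integrable lborel g" and tp: "totally_positive g"
  shows "zak (\<lambda>t. complex_of_real (g t)) x (1/2) = complex_of_real (\<Sum>\<^sub>\<infinity>k::int. g (x + of_int k) * cos (pi * of_int k))"
proof -
  have "zak (\<lambda>t. complex_of_real (g t)) x (1/2) = (\<Sum>\<^sub>\<infinity>k::int. complex_of_real (g (x + of_int k) * cos (pi * of_int k)))"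
    unfolding zak_def ek by (simp only: of_real_mult)
  also have "\<dots> = complex_of_real (\<Sum>\<^sub>\<infinity>k::int. g (x + of_int k) * cos (pi * of_int k))"
    using has_sum_of_real[OF has_sum_infsum[OF r_summable[OF cont integ tp]], where 'a=complex]
    by (rule infsumI)
  finally show ?thesis .
qed



lemma zak_nonzero:
  fixes g :: "real \<Rightarrow> real"
  assumes cont: "continuous_on UNIV g" and integ: "integrable lborel g" and tp: "totally_positive g"
    and nz: "fourier (\<lambda>t. complex_of_real (g t)) (1/2) \<noteq> 0"
  shows "\<exists>x. zak (\<lambda>t. complex_of_real (g t)) x (1/2) \<noteq> 0"
proof (rule ccontr)
  assume "\<not> ?thesis"
  then have Z0: "zak (\<lambda>t. complex_of_real (g t)) x (1/2) = 0" for x by auto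
  define E where "E t = exp (- 2 * pi * \<i> * complex_of_real (t * (1/2)))" for t
  define h where "h t = complex_of_real (g t) * E t" for t
  define \<sigma> where "\<sigma> = int_decode"
  define r where "r x k = g (x + of_int k) * cos (pi * of_int k)" for x and k :: int
  define J where "J n = {real_of_int (\<sigma> n) ..< real_of_int (\<sigma> n) + 1}" for n
  define P where "P n t = indicator (J n) t *\<^sub>R h t" for n t
  define Q where "Q n x = P n (real_of_int (\<sigma> n) + x)" for n x
  have g0: "0 \<le> g t" for t using tp_nonneg[OF tp] .
  have normE: "norm (E t) = 1" for t unfolding E_def by simp
  have hcont: "continuous_on UNIV h" unfolding h_def E_def
    by (intro continuous_intros continuous_on_compose2[OF continuous_on_of_real cont]) auto
  have hmeas: "h \<in> borel_measurable lborel"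
    using borel_measurable_continuous_onI[OF hcont] by simp
  have hint: "integrable lborel h"
    by (rule Bochner_Integration.integrable_bound[OF integ hmeas]) (auto simp: h_def norm_mult normE)
  have fourier_eq: "fourier (\<lambda>t. complex_of_real (g t)) (1/2) = integral\<^sup>L lborel h"
    unfolding fourier_def h_def E_def ..
  have bs: "bij \<sigma>" unfolding \<sigma>_def by (rule bij_int_decode)
  have sig_eq: "\<sigma> n = k \<longleftrightarrow> n = int_encode k" for n k
    unfolding \<sigma>_def by (metis int_decode_inverse int_encode_inverse)
  have inJ: "t \<in> J n \<longleftrightarrow> n = int_encode \<lfloor>t\<rfloor>" for t n
  proof -
    have "t \<in> J n \<longleftrightarrow> \<lfloor>t\<rfloor> = \<sigma> n" unfolding J_def floor_eq_iff by auto
    then show ?thesis using sig_eq[of n "\<lfloor>t\<rfloor>"] by metis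
  qed
  have Pint: "integrable lborel (P n)" for n
    unfolding P_def by (rule integrable_mult_indicator) (auto simp: J_def hint)
  have Psingle: "P n t = (if n = int_encode \<lfloor>t\<rfloor> then h t else 0)" for n t
    unfolding P_def by (auto simp: indicator_def inJ)
  have sumP: "(\<lambda>n. P n t) sums h t" for t
    unfolding Psingle using sums_single[of "int_encode \<lfloor>t\<rfloor>" "\<lambda>_. h t"] by simp
  have NPeq: "(LINT t|lborel. norm (P n t)) = (LINT t|lborel. g t * indicator {0 + of_int (\<sigma> n) ..< 0 + of_int (\<sigma> n) + 1} t)" for n
    by (intro Bochner_Integration.integral_cong) (auto simp: P_def h_def norm_mult normE J_def g0 indicator_def)
  have NPsum: "summable (\<lambda>n. LINT t|lborel. norm (P n t))"
  proof (rule summableI_nonneg_bounded)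
    fix n show "0 \<le> (LINT t|lborel. norm (P n t))" by (rule integral_nonneg_AE) auto
  next
    fix N
    have "(\<Sum>n<N. LINT t|lborel. norm (P n t))
        = (\<Sum>k\<in>\<sigma> ` {..<N}. LINT t|lborel. g t * indicator {0 + of_int k ..< 0 + of_int k + 1} t)"
      unfolding NPeq using bs by (subst sum.reindex) (auto simp: bij_def intro: inj_on_subset)
    also have "\<dots> \<le> integral\<^sup>L lborel g" by (rule interval_sum_bound[OF integ g0]) auto
    finally show "(\<Sum>n<N. LINT t|lborel. norm (P n t)) \<le> integral\<^sup>L lborel g" .
  qed
  have sP: "(\<lambda>n. integral\<^sup>L lborel (P n)) sums (LINT t|lborel. (\<Sum>n. P n t))"
  proof (rule sums_integral[OF Pint])
    show "summable (\<lambda>n. LINT t|lborel. norm (P n t))" by (rule NPsum)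
    have "summable (\<lambda>n. norm (P n t))" for t
    proof -
      have "(\<lambda>n. norm (P n t)) = (\<lambda>n. if n = int_encode \<lfloor>t\<rfloor> then norm (h t) else 0)"
        by (auto simp: Psingle)
      then show ?thesis by simp
    qed
    then show "AE t in lborel. summable (\<lambda>n. norm (P n t))" by simp
  qed
  have sumPh: "(\<Sum>n. P n t) = h t" for t using sumP[of t] by (simp add: sums_iff)
  have sP': "(\<lambda>n. integral\<^sup>L lborel (P n)) sums integral\<^sup>L lborel h"
    using sP unfolding sumPh .
  have PQ: "integral\<^sup>L lborel (P n) = integral\<^sup>L lborel (Q n)" for n
    using lborel_integral_real_affine[of 1 "P n" "real_of_int (\<sigma> n)"] unfolding Q_def by simp
  have NPQ: "(LINT t|lborel. norm (P n t)) = (LINT x|lborel. norm (Q n x))" for n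
    using lborel_integral_real_affine[of 1 "\<lambda>t. norm (P n t)" "real_of_int (\<sigma> n)"] unfolding Q_def by simp
  have Qint: "integrable lborel (Q n)" for n
    unfolding Q_def using lborel_integrable_real_affine[OF Pint, where c=1 and t="real_of_int (\<sigma> n)"] by simp
  have Qform: "Q n x = (if 0 \<le> x \<and> x < 1 then E x * complex_of_real (r x (\<sigma> n)) else 0)" for n x
  proof -
    have "real_of_int (\<sigma> n) + x \<in> J n \<longleftrightarrow> 0 \<le> x \<and> x < 1" unfolding J_def by auto
    moreover have "h (real_of_int (\<sigma> n) + x) = E x * complex_of_real (r x (\<sigma> n))"
      unfolding h_def r_def E_def using Eadd[of x "\<sigma> n"] by (simp add: add.commute)
    ultimately show ?thesis unfolding Q_def P_def by (simp add: indicator_def)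
  qed
  have rs: "(\<lambda>n. r x (\<sigma> n)) sums (\<Sum>\<^sub>\<infinity>k::int. r x k)" for x
  proof -
    have "(r x has_sum (\<Sum>\<^sub>\<infinity>k::int. r x k)) UNIV"
      unfolding r_def by (rule has_sum_infsum[OF r_summable[OF cont integ tp]])
    then have "((\<lambda>n. r x (\<sigma> n)) has_sum (\<Sum>\<^sub>\<infinity>k::int. r x k)) UNIV"
      using has_sum_reindex_bij_betw[OF bs] by blast
    then show ?thesis by (rule has_sum_imp_sums)
  qed
  have Qsums: "(\<lambda>n. Q n x) sums 0" for x
  proof (cases "0 \<le> x \<and> x < 1")
    case True
    have "(\<lambda>n. E x * complex_of_real (r x (\<sigma> n))) sums (E x * complex_of_real (\<Sum>\<^sub>\<infinity>k::int. r x k))"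
      by (intro sums_mult sums_of_real rs)
    moreover have "complex_of_real (\<Sum>\<^sub>\<infinity>k::int. r x k) = 0"
      using Z0[of x] zak_eq[OF cont integ tp, of x] unfolding r_def by simp
    ultimately show ?thesis using True unfolding Qform by simp
  next
    case False then have "(\<lambda>n. Q n x) = (\<lambda>n. 0)" unfolding Qform by auto
    then show ?thesis by simp
  qed
  have gs: "summable (\<lambda>n. g (x + of_int (\<sigma> n)))" for x
  proof -
    have "(\<lambda>n. g (x + of_int (\<sigma> n))) summable_on UNIV"
      using summable_on_reindex_bij_betw[OF bs, of "\<lambda>k. g (x + of_int k)"] tp_summable[OF cont integ tp, of x] by simp
    then show ?thesis by (rule summable_on_imp_summable)
  qed
  have normQ: "norm (Q n x) \<le> g (x + of_int (\<sigma> n))" for n x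
    unfolding Qform r_def using g0[of "x + of_int (\<sigma> n)"]
    by (auto simp: norm_mult normE abs_mult intro!: mult_left_le_one_le)
  have QNsum: "summable (\<lambda>n. norm (Q n x))" for x
    by (rule summable_comparison_test[OF _ gs[of x]]) (use normQ in auto)
  have sQ: "(\<lambda>n. integral\<^sup>L lborel (Q n)) sums (LINT x|lborel. (\<Sum>n. Q n x))"
    by (rule sums_integral[OF Qint]) (use QNsum NPsum NPQ in auto)
  have sumQ0: "(\<Sum>n. Q n x) = 0" for x using Qsums[of x] by (simp add: sums_iff)
  have "(\<lambda>n. integral\<^sup>L lborel (P n)) sums 0" using sQ unfolding sumQ0 PQ by simp
  then have "integral\<^sup>L lborel h = 0" using sP' sums_unique2 by blast
  then show False using nz fourier_eq by simp
qed

theorem mainTheorem5: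
  fixes g :: "real \<Rightarrow> real"
  assumes cont: "continuous_on UNIV g"
    and integ: "integrable lborel g"
    and tp: "totally_positive g"
    and form:
      "(\<exists>a :: nat \<Rightarrow> real. (\<forall>\<nu>. a \<nu> \<noteq> 0) \<and> summable (\<lambda>\<nu>. 1 / (a \<nu>)\<^sup>2) \<and>
          (\<forall>w. (\<lambda>\<nu>. tp_factor (a \<nu>) w) has_prod fourier (\<lambda>t. complex_of_real (g t)) w))
       \<or> (\<exists>(n::nat) (a :: nat \<Rightarrow> real). (\<forall>\<nu><n. a \<nu> \<noteq> 0) \<and>
          (\<forall>w. fourier (\<lambda>t. complex_of_real (g t)) w = (\<Prod>\<nu><n. tp_factor (a \<nu>) w)))"
  shows "(\<forall>x. (\<lambda>k::int. complex_of_real (g (x + of_int k)) * exp (- 2 * pi * \<i> * complex_of_real (of_int k * (1/2)))) summable_on UNIV)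
    \<and> (\<forall>x. zak (\<lambda>t. complex_of_real (g t)) x (1/2) \<in> \<real>)
    \<and> (\<forall>x. zak (\<lambda>t. complex_of_real (g t)) (x + 2) (1/2) = zak (\<lambda>t. complex_of_real (g t)) x (1/2))
    \<and> (\<exists>x. zak (\<lambda>t. complex_of_real (g t)) x (1/2) \<noteq> 0)"
proof (intro conjI allI)
  fix x
  show "(\<lambda>k::int. complex_of_real (g (x + of_int k)) * exp (- 2 * pi * \<i> * complex_of_real (of_int k * (1/2)))) summable_on UNIV"
    unfolding ek by (simp only: of_real_mult[symmetric]) (rule summable_on_of_real[OF r_summable[OF cont integ tp]])
next
  fix x
  show "zak (\<lambda>t. complex_of_real (g t)) x (1/2) \<in> \<real>"
    unfolding zak_eq[OF cont integ tp] by simp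
next
  fix x
  have bij: "bij_betw (\<lambda>k::int. k + 2) UNIV UNIV"
    by (rule bij_betwI[where g="\<lambda>k. k - 2"]) auto
  have "(\<Sum>\<^sub>\<infinity>k::int. g (x + 2 + of_int k) * cos (pi * of_int k))
      = (\<Sum>\<^sub>\<infinity>k::int. g (x + of_int (k + 2)) * cos (pi * of_int (k + 2)))"
  proof (intro infsum_cong)
    fix k :: int
    have e: "x + 2 + of_int k = x + of_int (k+2)" by simp
    show "g (x + 2 + of_int k) * cos (pi * of_int k) = g (x + of_int (k + 2)) * cos (pi * of_int (k + 2))"
      by (simp only: e cos_int_add2)
  qed
  also have "\<dots> = (\<Sum>\<^sub>\<infinity>k::int. g (x + of_int k) * cos (pi * of_int k))"
    by (rule infsum_reindex_bij_betw[OF bij])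
  finally show "zak (\<lambda>t. complex_of_real (g t)) (x + 2) (1/2) = zak (\<lambda>t. complex_of_real (g t)) x (1/2)"
    unfolding zak_eq[OF cont integ tp] by simp
next
  show "\<exists>x. zak (\<lambda>t. complex_of_real (g t)) x (1/2) \<noteq> 0"
    by (rule zak_nonzero[OF cont integ tp fourier_nz[OF form]])
qed


end
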